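(* Let $K$ be a finite subgroup of $U(\mathbb{H})$ and consider the reflection system $L=K$. Then $H_K=[K,K]=\langle aba^{-1}b^{-1}: a,b\in K\rangle$, the commutator subgroup of $K$. Therefore the reflection groups in canonical form with $L=K$ are the groups $G_K(K,H)$ where $H$ is a subgroup of $K$ with $[K,K]\subseteq H\subseteq K$ (any such $H$ is automatically normal in $K$).
   Context: $\mathbb{H}$ is the real quaternion algebra with basis $1,i,j,k$ and $U(\mathbb{H})$ its group of unit quaternions. For a group $K$ and $a,b\in K$ put $a\circ b:=ab^{-1}a$. A reflection system for a finite group $K$ is a subset $L\subseteq K$ which generates $K$, is closed under $\circ$, and contains $1$ (so $K$ itself is a reflection system for $K$). For $b\in K$ let $M_b=\begin{pmatrix}0&b\\ b^{-1}&0\end{pmatrix}$. For a reflection system $L$, $H_L:=\{h\in K:\mathrm{diag}(h,1)\in\langle M_b: b\in L\rangle\}$. For $H\trianglelefteq K$ with $H\subseteq L$, $LH=L$, $G(K,L,H)$ is the subgroup of $U(\mathbb{H}^2)$ generated by $\mathrm{diag}(h,1),\mathrm{diag}(1,h)$ ($h\in H$) and $M_b$ ($b\in L$); it is in canonical form, written $G_K(L,H)$, if $\{b\in K: M_b\in G(K,L,H)\}=L$. *)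

theory Defs
  imports Main "HOL.Real"
begin

datatype quat = Quat (qre: real) (qi: real) (qj: real) (qk: real)

definition qzero :: quat where "qzero = Quat 0 0 0 0"
definition qone :: quat where "qone = Quat 1 0 0 0"

definition qmult :: "quat \<Rightarrow> quat \<Rightarrow> quat" where
  "qmult p q = Quat
     (qre p * qre q - qi p * qi q - qj p * qj q - qk p * qk q)
     (qre p * qi q + qi p * qre q + qj p * qk q - qk p * qj q)
     (qre p * qj q - qi p * qk q + qj p * qre q + qk p * qi q)
     (qre p * qk q + qi p * qj q - qj p * qi q + qk p * qre q)"

definition qadd :: "quat \<Rightarrow> quat \<Rightarrow> quat" where
  "qadd p q = Quat (qre p + qre q) (qi p + qi q) (qj p + qj q) (qk p + qk q)"

definition qcnj :: "quat \<Rightarrow> quat" where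
  "qcnj q = Quat (qre q) (- qi q) (- qj q) (- qk q)"

definition qnorm2 :: "quat \<Rightarrow> real" where
  "qnorm2 q = (qre q)^2 + (qi q)^2 + (qj q)^2 + (qk q)^2"

text \<open>U(H): unit quaternions; the inverse of a unit quaternion is its conjugate.\<close>
definition UH :: "quat set" where "UH = {q. qnorm2 q = 1}"

inductive_set qgen :: "quat set \<Rightarrow> quat set" for S where
  qgen_one: "qone \<in> qgen S"
| qgen_base: "s \<in> S \<Longrightarrow> s \<in> qgen S"
| qgen_mult: "a \<in> qgen S \<Longrightarrow> b \<in> qgen S \<Longrightarrow> qmult a b \<in> qgen S"
| qgen_inv: "a \<in> qgen S \<Longrightarrow> qcnj a \<in> qgen S"

definition is_subgroup_UH :: "quat set \<Rightarrow> bool" where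
  "is_subgroup_UH K \<longleftrightarrow> K \<subseteq> UH \<and> qone \<in> K \<and>
     (\<forall>a\<in>K. \<forall>b\<in>K. qmult a b \<in> K) \<and> (\<forall>a\<in>K. qcnj a \<in> K)"

definition is_subgroup_of :: "quat set \<Rightarrow> quat set \<Rightarrow> bool" where
  "is_subgroup_of H K \<longleftrightarrow> H \<subseteq> K \<and> qone \<in> H \<and>
     (\<forall>a\<in>H. \<forall>b\<in>H. qmult a b \<in> H) \<and> (\<forall>a\<in>H. qcnj a \<in> H)"

definition is_normal_in :: "quat set \<Rightarrow> quat set \<Rightarrow> bool" where
  "is_normal_in H K \<longleftrightarrow> is_subgroup_of H K \<and>
     (\<forall>k\<in>K. \<forall>h\<in>H. qmult (qmult k h) (qcnj k) \<in> H)"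

definition commutator_subgroup :: "quat set \<Rightarrow> quat set" where
  "commutator_subgroup K =
     qgen {qmult (qmult a b) (qmult (qcnj a) (qcnj b)) | a b. a \<in> K \<and> b \<in> K}"

definition qcirc :: "quat \<Rightarrow> quat \<Rightarrow> quat" where
  "qcirc a b = qmult (qmult a (qcnj b)) a"

definition reflection_system :: "quat set \<Rightarrow> quat set \<Rightarrow> bool" where
  "reflection_system K L \<longleftrightarrow> L \<subseteq> K \<and> qgen L = K \<and>
     (\<forall>a\<in>L. \<forall>b\<in>L. qcirc a b \<in> L) \<and> qone \<in> L"

type_synonym qmat = "quat \<times> quat \<times> quat \<times> quat"

definition mmult :: "qmat \<Rightarrow> qmat \<Rightarrow> qmat" where
  "mmult A B = (case A of (a11, a12, a21, a22) \<Rightarrow> case B of (b11, b12, b21, b22) \<Rightarrow>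
     (qadd (qmult a11 b11) (qmult a12 b21), qadd (qmult a11 b12) (qmult a12 b22),
      qadd (qmult a21 b11) (qmult a22 b21), qadd (qmult a21 b12) (qmult a22 b22)))"

text \<open>Conjugate transpose: the inverse of a matrix in U(H^2).\<close>
definition mstar :: "qmat \<Rightarrow> qmat" where
  "mstar A = (case A of (a11, a12, a21, a22) \<Rightarrow> (qcnj a11, qcnj a21, qcnj a12, qcnj a22))"

definition mone :: qmat where "mone = (qone, qzero, qzero, qone)"

definition mdiag :: "quat \<Rightarrow> quat \<Rightarrow> qmat" where
  "mdiag h k = (h, qzero, qzero, k)"

definition Mb :: "quat \<Rightarrow> qmat" where
  "Mb b = (qzero, b, qcnj b, qzero)"

inductive_set mgen :: "qmat set \<Rightarrow> qmat set" for S where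
  mgen_one: "mone \<in> mgen S"
| mgen_base: "s \<in> S \<Longrightarrow> s \<in> mgen S"
| mgen_mult: "a \<in> mgen S \<Longrightarrow> b \<in> mgen S \<Longrightarrow> mmult a b \<in> mgen S"
| mgen_inv: "a \<in> mgen S \<Longrightarrow> mstar a \<in> mgen S"

definition H_L :: "quat set \<Rightarrow> quat set \<Rightarrow> quat set" where
  "H_L K L = {h \<in> K. mdiag h qone \<in> mgen (Mb ` L)}"

definition G_KLH :: "quat set \<Rightarrow> quat set \<Rightarrow> quat set \<Rightarrow> qmat set" where
  "G_KLH K L H = mgen ((\<lambda>h. mdiag h qone) ` H \<union> (\<lambda>h. mdiag qone h) ` H \<union> Mb ` L)"

definition canonical_form :: "quat set \<Rightarrow> quat set \<Rightarrow> quat set \<Rightarrow> bool" where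
  "canonical_form K L H \<longleftrightarrow> {b \<in> K. Mb b \<in> G_KLH K L H} = L"

end

theory Submission
  imports Defs
begin

lemma quat_eqI: "qre p = qre q \<Longrightarrow> qi p = qi q \<Longrightarrow> qj p = qj q \<Longrightarrow> qk p = qk q \<Longrightarrow> p = q"
  by (cases p; cases q) auto

lemma qmult_assoc: "qmult (qmult a b) c = qmult a (qmult b c)"
  by (rule quat_eqI) (simp_all add: qmult_def algebra_simps)

lemma qmult_one_left[simp]: "qmult qone a = a"
  by (rule quat_eqI) (simp_all add: qmult_def qone_def)
lemma qmult_one_right[simp]: "qmult a qone = a"
  by (rule quat_eqI) (simp_all add: qmult_def qone_def)
lemma qmult_zero_left[simp]: "qmult qzero a = qzero"
  by (rule quat_eqI) (simp_all add: qmult_def qzero_def)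
lemma qmult_zero_right[simp]: "qmult a qzero = qzero"
  by (rule quat_eqI) (simp_all add: qmult_def qzero_def)
lemma qadd_zero_left[simp]: "qadd qzero a = a"
  by (rule quat_eqI) (simp_all add: qadd_def qzero_def)
lemma qadd_zero_right[simp]: "qadd a qzero = a"
  by (rule quat_eqI) (simp_all add: qadd_def qzero_def)
lemma qcnj_cnj[simp]: "qcnj (qcnj a) = a"
  by (rule quat_eqI) (simp_all add: qcnj_def)
lemma qcnj_one[simp]: "qcnj qone = qone"
  by (rule quat_eqI) (simp_all add: qcnj_def qone_def)
lemma qcnj_zero[simp]: "qcnj qzero = qzero"
  by (rule quat_eqI) (simp_all add: qcnj_def qzero_def)
lemma qcnj_mult: "qcnj (qmult a b) = qmult (qcnj b) (qcnj a)"
  by (rule quat_eqI) (simp_all add: qcnj_def qmult_def algebra_simps)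
lemma qone_ne_zero[simp]: "qone \<noteq> qzero" "qzero \<noteq> qone"
  by (simp_all add: qone_def qzero_def)

lemma unit_l: "qnorm2 a = 1 \<Longrightarrow> qmult (qcnj a) a = qone"
  by (rule quat_eqI) (auto simp: qcnj_def qmult_def qone_def qnorm2_def power2_eq_square algebra_simps)
lemma unit_r: "qnorm2 a = 1 \<Longrightarrow> qmult a (qcnj a) = qone"
  by (rule quat_eqI) (auto simp: qcnj_def qmult_def qone_def qnorm2_def power2_eq_square algebra_simps)
lemma unit_l2: "qnorm2 a = 1 \<Longrightarrow> qmult (qcnj a) (qmult a z) = z"
  by (metis qmult_assoc unit_l qmult_one_left)
lemma unit_r2: "qnorm2 a = 1 \<Longrightarrow> qmult a (qmult (qcnj a) z) = z"
  by (metis qmult_assoc unit_r qmult_one_left)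

locale grp =
  fixes K :: "quat set"
  assumes sg: "is_subgroup_UH K"
begin

lemma K_unit: "a \<in> K \<Longrightarrow> qnorm2 a = 1"
  using sg by (auto simp: is_subgroup_UH_def UH_def)
lemma K_one: "qone \<in> K" using sg by (simp add: is_subgroup_UH_def)
lemma K_mult: "a \<in> K \<Longrightarrow> b \<in> K \<Longrightarrow> qmult a b \<in> K" using sg by (simp add: is_subgroup_UH_def)
lemma K_cnj: "a \<in> K \<Longrightarrow> qcnj a \<in> K" using sg by (simp add: is_subgroup_UH_def)

abbreviation "C \<equiv> commutator_subgroup K"

lemma C_sub: "C \<subseteq> K"
proof
  fix x assume "x \<in> C"
  then show "x \<in> K" unfolding commutator_subgroup_def
    by induct (auto intro: K_one K_mult K_cnj)
qed
lemma C_one: "qone \<in> C" by (simp add: commutator_subgroup_def qgen_one)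
lemma C_mult: "a \<in> C \<Longrightarrow> b \<in> C \<Longrightarrow> qmult a b \<in> C"
  by (simp add: commutator_subgroup_def qgen_mult)
lemma C_cnj: "a \<in> C \<Longrightarrow> qcnj a \<in> C"
  by (simp add: commutator_subgroup_def qgen_inv)
lemma C_comm: "a \<in> K \<Longrightarrow> b \<in> K \<Longrightarrow> qmult (qmult a b) (qmult (qcnj a) (qcnj b)) \<in> C"
  unfolding commutator_subgroup_def by (rule qgen_base) blast

lemma C_normal: assumes k: "k \<in> K" and c: "c \<in> C" shows "qmult (qmult k c) (qcnj k) \<in> C"
proof -
  have cK: "c \<in> K" using c C_sub by auto
  have "qmult (qmult k c) (qcnj k) = qmult (qmult (qmult k c) (qmult (qcnj k) (qcnj c))) c"
    using K_unit[OF cK] by (simp add: qmult_assoc unit_l2 unit_l unit_r unit_r2)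
  then show ?thesis using C_comm[OF k cK] C_mult c by simp
qed

lemma rot2: assumes "u \<in> K" "w \<in> K" "qmult u w \<in> C" shows "qmult w u \<in> C"
proof -
  have "qmult w u = qmult (qmult w (qmult u w)) (qcnj w)"
    using K_unit[OF assms(2)] by (simp add: qmult_assoc unit_l2 unit_l unit_r unit_r2)
  then show ?thesis using C_normal assms by simp
qed

lemma swap12: assumes "a \<in> K" "b \<in> K" "w \<in> K" "qmult a (qmult b w) \<in> C"
  shows "qmult b (qmult a w) \<in> C"
proof -
  have "qmult b (qmult a w) = qmult (qmult (qmult b a) (qmult (qcnj b) (qcnj a))) (qmult a (qmult b w))"
    using K_unit[OF assms(1)] K_unit[OF assms(2)] by (simp add: qmult_assoc unit_l2 unit_l unit_r unit_r2)
  then show ?thesis using C_comm assms C_mult by simp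
qed

lemma rot4: assumes "a \<in> K" "b \<in> K" "c \<in> K" "d \<in> K" "qmult a (qmult b (qmult c d)) \<in> C"
  shows "qmult b (qmult c (qmult d a)) \<in> C"
  using rot2[of a "qmult b (qmult c d)"] assms K_mult by (simp add: qmult_assoc)

lemma swap23: assumes "a \<in> K" "b \<in> K" "c \<in> K" "d \<in> K" "qmult a (qmult b (qmult c d)) \<in> C"
  shows "qmult a (qmult c (qmult b d)) \<in> C"
proof -
  have "qmult b (qmult c (qmult d a)) \<in> C" using rot4 assms by blast
  then have "qmult c (qmult b (qmult d a)) \<in> C" using swap12 assms K_mult by blast
  then have "qmult b (qmult d (qmult a c)) \<in> C" using rot4 assms by blast
  then have "qmult d (qmult a (qmult c b)) \<in> C" using rot4 assms by blast
  then show ?thesis using rot4 assms by blast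
qed

lemma swap34: assumes "a \<in> K" "b \<in> K" "c \<in> K" "d \<in> K" "qmult a (qmult b (qmult c d)) \<in> C"
  shows "qmult a (qmult b (qmult d c)) \<in> C"
proof -
  have "qmult b (qmult c (qmult d a)) \<in> C" using rot4 assms by blast
  then have "qmult b (qmult d (qmult c a)) \<in> C" using swap23 assms by blast
  then have "qmult d (qmult c (qmult a b)) \<in> C" using rot4 assms by blast
  then have "qmult c (qmult a (qmult b d)) \<in> C" using rot4 assms by blast
  then show ?thesis using rot4 assms by blast
qed

end

lemma mmult_dd[simp]: "mmult (mdiag a b) (mdiag c d) = mdiag (qmult a c) (qmult b d)"
  by (simp add: mmult_def mdiag_def)
lemma mstar_d[simp]: "mstar (mdiag a b) = mdiag (qcnj a) (qcnj b)"
  by (simp add: mstar_def mdiag_def)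
lemma mmult_MM[simp]: "mmult (Mb a) (Mb b) = mdiag (qmult a (qcnj b)) (qmult (qcnj a) b)"
  by (simp add: mmult_def mdiag_def Mb_def)
lemma mmult_dA[simp]: "mmult (mdiag x y) (qzero, x', y', qzero) = (qzero, qmult x x', qmult y y', qzero)"
  by (simp add: mmult_def mdiag_def)
lemma mmult_Ad[simp]: "mmult (qzero, x, y, qzero) (mdiag x' y') = (qzero, qmult x y', qmult y x', qzero)"
  by (simp add: mmult_def mdiag_def)
lemma mmult_AA[simp]: "mmult (qzero, x, y, qzero) (qzero, x', y', qzero) = mdiag (qmult x y') (qmult y x')"
  by (simp add: mmult_def mdiag_def)
lemma mstar_A[simp]: "mstar (qzero, x, y, qzero) = (qzero, qcnj y, qcnj x, qzero)"
  by (simp add: mstar_def)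
lemma mone_d: "mone = mdiag qone qone" by (simp add: mone_def mdiag_def)
lemma swap_d: "mmult (mmult (Mb qone) (mdiag x y)) (Mb qone) = mdiag y x"
  by (simp add: mmult_def mdiag_def Mb_def)

lemma mgen_mono: "S \<subseteq> mgen T \<Longrightarrow> mgen S \<subseteq> mgen T"
proof
  fix x assume "S \<subseteq> mgen T" "x \<in> mgen S"
  then show "x \<in> mgen T" by (induct rule: mgen.induct[OF \<open>x \<in> mgen S\<close>])
    (auto intro: mgen.intros)
qed

context grp begin

abbreviation "M \<equiv> mgen (Mb ` K)"

definition inv_P :: "qmat \<Rightarrow> bool" where
  "inv_P m \<longleftrightarrow> (\<exists>x y. x \<in> K \<and> y \<in> K \<and> qmult x y \<in> C \<and>
     (m = mdiag x y \<or> m = (qzero, x, y, qzero)))"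

lemma inv_P_D: "x \<in> K \<Longrightarrow> y \<in> K \<Longrightarrow> qmult x y \<in> C \<Longrightarrow> inv_P (mdiag x y)"
  unfolding inv_P_def by blast
lemma inv_P_A: "x \<in> K \<Longrightarrow> y \<in> K \<Longrightarrow> qmult x y \<in> C \<Longrightarrow> inv_P (qzero, x, y, qzero)"
  unfolding inv_P_def by blast
lemma inv_P_E: assumes "inv_P m"
  obtains x y where "x \<in> K" "y \<in> K" "qmult x y \<in> C" "m = mdiag x y"
  | x y where "x \<in> K" "y \<in> K" "qmult x y \<in> C" "m = (qzero, x, y, qzero)"
  using assms unfolding inv_P_def by blast

lemma M_inv: "m \<in> M \<Longrightarrow> inv_P m"
proof (induct rule: mgen.induct)
  case mgen_one
  show ?case unfolding mone_d by (rule inv_P_D) (simp_all add: K_one C_one)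
next
  case (mgen_base s)
  then obtain b where b: "b \<in> K" "s = Mb b" by auto
  have "qmult b (qcnj b) \<in> C" using unit_r[OF K_unit[OF b(1)]] C_one by simp
  then show ?case unfolding b(2) Mb_def using b K_cnj[OF b(1)] by (intro inv_P_A)
next
  case (mgen_mult a b)
  have key: "qmult (qmult x x') (qmult y y') \<in> C \<and> qmult (qmult x y') (qmult y x') \<in> C
     \<and> qmult x x' \<in> K \<and> qmult y y' \<in> K \<and> qmult x y' \<in> K \<and> qmult y x' \<in> K"
    if xy: "x \<in> K" "y \<in> K" "qmult x y \<in> C" and xy': "x' \<in> K" "y' \<in> K" "qmult x' y' \<in> C"
    for x y x' y'
  proof -
    have h0: "qmult x (qmult y (qmult x' y')) \<in> C"
      using C_mult[OF xy(3) xy'(3)] by (simp add: qmult_assoc)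
    have h1: "qmult (qmult x x') (qmult y y') \<in> C"
      using swap23[OF xy(1,2) xy'(1,2) h0] by (simp add: qmult_assoc)
    have h2: "qmult (qmult x y') (qmult y x') \<in> C"
      using swap23[OF xy(1) xy(2) xy'(2) xy'(1) swap34[OF xy(1,2) xy'(1,2) h0]]
      by (simp add: qmult_assoc)
    show ?thesis using h1 h2 K_mult xy xy' by blast
  qed
  from mgen_mult(2) show ?case
  proof (cases rule: inv_P_E)
    case (1 x y) note a = this
    from mgen_mult(4) show ?thesis
    proof (cases rule: inv_P_E)
      case (1 x' y') then show ?thesis using a key[of x y x' y'] by (simp add: inv_P_D)
    next
      case (2 x' y') then show ?thesis using a key[of x y x' y'] by (simp add: inv_P_A)
    qed
  next
    case (2 x y) note a = this
    from mgen_mult(4) show ?thesis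
    proof (cases rule: inv_P_E)
      case (1 x' y') then show ?thesis using a key[of x y x' y'] by (simp add: inv_P_A)
    next
      case (2 x' y') then show ?thesis using a key[of x y x' y'] by (simp add: inv_P_D)
    qed
  qed
next
  case (mgen_inv a)
  from mgen_inv(2) show ?case
  proof (cases rule: inv_P_E)
    case (1 x y)
    have c1: "qmult (qcnj x) (qcnj y) \<in> C"
      using C_cnj[OF rot2[OF 1(1,2,3)]] by (simp add: qcnj_mult)
    then show ?thesis using 1 K_cnj by (simp add: inv_P_D)
  next
    case (2 x y)
    have c2: "qmult (qcnj y) (qcnj x) \<in> C"
      using C_cnj[OF 2(3)] by (simp add: qcnj_mult)
    then show ?thesis using 2 K_cnj by (simp add: inv_P_A)
  qed
qed

lemma HL_sub: "H_L K K \<subseteq> C"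
proof
  fix h assume "h \<in> H_L K K"
  then have "h \<in> K" "mdiag h qone \<in> M" by (auto simp: H_L_def)
  then have "inv_P (mdiag h qone)" using M_inv by blast
  then show "h \<in> C" unfolding inv_P_def by (auto simp: mdiag_def)
qed

lemma M_Mb: "b \<in> K \<Longrightarrow> Mb b \<in> M" by (simp add: mgen_base)

lemma M_comm: assumes a: "a \<in> K" and b: "b \<in> K"
  shows "mdiag (qmult (qmult a b) (qmult (qcnj a) (qcnj b))) qone \<in> M"
proof -
  define k where "k = qmult (qcnj a) (qcnj b)"
  have kK: "k \<in> K" using a b K_cnj K_mult k_def by auto
  have m1: "mdiag k (qmult a b) \<in> M"
    using mgen_mult[OF M_Mb[OF K_cnj[OF a]] M_Mb[OF b]] k_def by simp
  have m2: "mdiag (qcnj k) k \<in> M"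
    using mgen_inv[OF mgen_mult[OF M_Mb[OF kK] M_Mb[OF K_one]]] by simp
  have "mmult (mdiag k (qmult a b)) (mdiag (qcnj k) k) \<in> M" using mgen_mult[OF m1 m2] .
  moreover have "qmult k (qcnj k) = qone" using unit_r K_unit kK by blast
  ultimately have m3: "mdiag qone (qmult (qmult a b) k) \<in> M" by simp
  have "mmult (mmult (Mb qone) (mdiag qone (qmult (qmult a b) k))) (Mb qone) \<in> M"
    using M_Mb[OF K_one] m3 by (blast intro: mgen_mult)
  then show ?thesis using k_def by (simp add: swap_d)
qed

lemma C_sub_HL: "C \<subseteq> H_L K K"
proof
  fix h assume hC: "h \<in> C"
  have "mdiag h qone \<in> M" using hC unfolding commutator_subgroup_def
  proof induct
    case qgen_one then show ?case using mgen_one mone_d by metis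
  next
    case (qgen_base s) then show ?case using M_comm by blast
  next
    case (qgen_mult a b) then show ?case using mgen_mult[of "mdiag a qone" _ "mdiag b qone"] by simp
  next
    case (qgen_inv a) then show ?case using mgen_inv[of "mdiag a qone"] by simp
  qed
  then show "h \<in> H_L K K" using hC C_sub by (auto simp: H_L_def)
qed

lemma HL_eq: "H_L K K = C" using HL_sub C_sub_HL by blast

lemma P3_lemma: assumes H': "is_normal_in H' K"
  shows "\<exists>H. is_subgroup_of H K \<and> C \<subseteq> H \<and> G_KLH K K H' = G_KLH K K H"
proof -
  define T where "T = (\<lambda>h. mdiag h qone) ` H' \<union> (\<lambda>h. mdiag qone h) ` H' \<union> Mb ` K"
  define G where "G = mgen T"
  have GG: "G_KLH K K H' = G" unfolding G_def T_def G_KLH_def ..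
  have Gm: "x \<in> G \<Longrightarrow> y \<in> G \<Longrightarrow> mmult x y \<in> G" for x y unfolding G_def by (rule mgen_mult)
  have Gi: "x \<in> G \<Longrightarrow> mstar x \<in> G" for x unfolding G_def by (rule mgen_inv)
  have G1: "mone \<in> G" unfolding G_def by (rule mgen_one)
  have GMb: "b \<in> K \<Longrightarrow> Mb b \<in> G" for b unfolding G_def T_def by (rule mgen_base) blast
  have GH': "h \<in> H' \<Longrightarrow> mdiag h qone \<in> G" for h unfolding G_def T_def by (rule mgen_base) blast
  define H where "H = {h \<in> K. mdiag h qone \<in> G}"
  have H'K: "H' \<subseteq> K" using H' by (auto simp: is_normal_in_def is_subgroup_of_def)
  have MG: "M \<subseteq> G" unfolding G_def
  proof (rule mgen_mono)
    show "Mb ` K \<subseteq> mgen T" using GMb G_def by blast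
  qed
  have sub: "is_subgroup_of H K" unfolding is_subgroup_of_def
  proof (intro conjI ballI)
    show "H \<subseteq> K" unfolding H_def by blast
    show "qone \<in> H" unfolding H_def using K_one G1 mone_d by simp
  next
    fix a b assume "a \<in> H" "b \<in> H"
    then show "qmult a b \<in> H" unfolding H_def
      using Gm[of "mdiag a qone" "mdiag b qone"] K_mult by simp
  next
    fix a assume "a \<in> H"
    then show "qcnj a \<in> H" unfolding H_def
      using Gi[of "mdiag a qone"] K_cnj by simp
  qed
  have CH: "C \<subseteq> H" using HL_eq MG unfolding H_L_def H_def by blast
  have H'H: "H' \<subseteq> H" unfolding H_def using H'K GH' by blast
  have "G \<subseteq> G_KLH K K H" unfolding G_def G_KLH_def
  proof (rule mgen_mono)
    show "T \<subseteq> mgen ((\<lambda>h. mdiag h qone) ` H \<union> (\<lambda>h. mdiag qone h) ` H \<union> Mb ` K)"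
      unfolding T_def using H'H by (blast intro: mgen_base)
  qed
  moreover have "G_KLH K K H \<subseteq> G" unfolding G_KLH_def G_def
  proof (rule mgen_mono)
    have "mdiag h qone \<in> G" if "h \<in> H" for h using that H_def by blast
    moreover have "mdiag qone h \<in> G" if "h \<in> H" for h
    proof -
      have "mmult (mmult (Mb qone) (mdiag h qone)) (Mb qone) \<in> G"
        using Gm GMb[OF K_one] that H_def by blast
      then show ?thesis by (simp add: swap_d)
    qed
    ultimately show "(\<lambda>h. mdiag h qone) ` H \<union> (\<lambda>h. mdiag qone h) ` H \<union> Mb ` K \<subseteq> mgen T"
      using GMb G_def by blast
  qed
  ultimately show ?thesis using sub CH GG by blast
qed


end

theorem lemma4p2:
  assumes "finite K" and "is_subgroup_UH K"
  shows "H_L K K = commutator_subgroup K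
    \<and> (\<forall>H. is_subgroup_of H K \<and> commutator_subgroup K \<subseteq> H \<longrightarrow>
            is_normal_in H K \<and> canonical_form K K H)
    \<and> (\<forall>H'. is_normal_in H' K \<longrightarrow>
            (\<exists>H. is_subgroup_of H K \<and> commutator_subgroup K \<subseteq> H \<and>
                 G_KLH K K H' = G_KLH K K H))"
proof -
  interpret grp K using assms(2) by unfold_locales
  have P2: "is_normal_in H K \<and> canonical_form K K H"
    if H: "is_subgroup_of H K" "C \<subseteq> H" for H
  proof
    show "is_normal_in H K" unfolding is_normal_in_def
    proof (intro conjI ballI)
      fix k h assume k: "k \<in> K" and h: "h \<in> H"
      have hK: "h \<in> K" using H h by (auto simp: is_subgroup_of_def)
      have "qmult (qmult k h) (qcnj k) = qmult (qmult (qmult k h) (qmult (qcnj k) (qcnj h))) h"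
        using K_unit[OF hK] by (simp add: qmult_assoc unit_l2 unit_l unit_r unit_r2)
      moreover have "qmult (qmult k h) (qmult (qcnj k) (qcnj h)) \<in> H" using C_comm[OF k hK] H by auto
      ultimately show "qmult (qmult k h) (qcnj k) \<in> H" using H h by (auto simp: is_subgroup_of_def)
    qed (rule H(1))
    show "canonical_form K K H" unfolding canonical_form_def G_KLH_def
      by (auto intro: mgen_base)
  qed
  have P3: "\<exists>H. is_subgroup_of H K \<and> C \<subseteq> H \<and> G_KLH K K H' = G_KLH K K H" if H': "is_normal_in H' K" for H'
    using P3_lemma[OF H'] .
  show ?thesis using HL_eq P2 P3 by blast
qed

end
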